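(* For $\theta\in(0,1)$ let $P_\theta$ be the geometric distribution $p_\theta(i)=(1-\theta)\theta^i$, $i\ge 0$, and let $N_\theta^{**}$ be the lengths of a binary prefix code minimizing the maximal pointwise redundancy $R^*(N,P_\theta)=\sup_{i\ge 0}[n(i)+\log_2 p_\theta(i)]$. Then $$\liminf_{\theta\uparrow1}R^*(N_\theta^{**},P_\theta)=1-\log_2\log_2 e,\qquad \limsup_{\theta\uparrow1}R^*(N_\theta^{**},P_\theta)=2-\log_2 e,$$ where $e$ is the base of the natural logarithm.
   Context: A binary prefix code for the nonnegative integers assigns to each $i\ge0$ a codeword in $\{0,1\}^*$ such that no codeword is a prefix of another; $n(i)$ is the length of the codeword for $i$ and $N=\{n(i)\}$. *)

theory Defs
  imports "HOL-Analysis.Analysis" "HOL-Library.Sublist"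
begin

definition prefix_code :: "(nat \<Rightarrow> bool list) \<Rightarrow> bool" where
  "prefix_code c \<longleftrightarrow> (\<forall>i j. i \<noteq> j \<longrightarrow> \<not> prefix (c i) (c j))"

definition geom_p :: "real \<Rightarrow> nat \<Rightarrow> real" where
  "geom_p \<theta> i = (1 - \<theta>) * \<theta> ^ i"

definition max_redundancy :: "(nat \<Rightarrow> nat) \<Rightarrow> (nat \<Rightarrow> real) \<Rightarrow> ereal" where
  "max_redundancy n p = (SUP i. ereal (real (n i) + log 2 (p i)))"

definition prefix_code_lengths :: "(nat \<Rightarrow> nat) \<Rightarrow> bool" where
  "prefix_code_lengths n \<longleftrightarrow> (\<exists>c. prefix_code c \<and> (\<forall>i. length (c i) = n i))"

text \<open>R*(N_theta^{**}, P_theta): the minimal value of the maximal pointwise redundancy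
  over all binary prefix codes.\<close>
definition opt_max_redundancy :: "real \<Rightarrow> ereal" where
  "opt_max_redundancy \<theta> = (INF n\<in>{n. prefix_code_lengths n}. max_redundancy n (geom_p \<theta>))"

end

theory Submission
  imports Defs
begin


lemma card_ext:
  fixes w :: "bool list"
  assumes "length w \<le> L"
  shows "card {v. length v = L \<and> prefix w v} = 2 ^ (L - length w)"
proof -
  have eq: "{v. length v = L \<and> prefix w v} = (\<lambda>u. w @ u) ` {u. length u = L - length w}"
    using assms by (auto simp: prefix_def)
  have "card {u::bool list. length u = L - length w} = 2 ^ (L - length w)"
    using card_lists_length_eq[of "UNIV::bool set" "L - length w"] by simp
  moreover have "inj_on (\<lambda>u. w @ u) {u. length u = L - length w}" by (auto simp: inj_on_def)
  ultimately show ?thesis unfolding eq by (simp add: card_image)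
qed

lemma kraft_nat:
  assumes pc: "prefix_code c" and that: "\<forall>i<K. length (c i) \<le> L"
  shows "(\<Sum>i<K. (2::nat) ^ (L - length (c i))) \<le> 2 ^ L"
proof -
  define E where "E i = {v::bool list. length v = L \<and> prefix (c i) v}" for i
  have fin: "finite {v::bool list. length v = L}"
    using finite_lists_length_eq[of "UNIV::bool set" L] by simp
  have disj: "\<forall>i\<in>{..<K}. \<forall>j\<in>{..<K}. i \<noteq> j \<longrightarrow> E i \<inter> E j = {}"
  proof (intro ballI impI)
    fix i j :: nat assume "i \<noteq> j"
    show "E i \<inter> E j = {}"
    proof (rule ccontr)
      assume "E i \<inter> E j \<noteq> {}"
      then obtain v where "prefix (c i) v" "prefix (c j) v" by (auto simp: E_def)
      then have "prefix (c i) (c j) \<or> prefix (c j) (c i)" using prefix_same_cases by blast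
      with pc \<open>i \<noteq> j\<close> show False unfolding prefix_code_def by metis
    qed
  qed
  have "(\<Sum>i<K. (2::nat) ^ (L - length (c i))) = (\<Sum>i<K. card (E i))"
    using that by (intro sum.cong) (auto simp: E_def card_ext)
  also have "\<dots> = card (\<Union>i<K. E i)"
  proof (rule card_UN_disjoint[symmetric])
    show "finite {..<K}" by simp
    show "\<forall>i\<in>{..<K}. finite (E i)" unfolding E_def using fin by (auto intro: rev_finite_subset)
    show "\<forall>i\<in>{..<K}. \<forall>j\<in>{..<K}. i \<noteq> j \<longrightarrow> E i \<inter> E j = {}" by (rule disj)
  qed
  also have "\<dots> \<le> card {v::bool list. length v = L}"
    by (rule card_mono[OF fin]) (auto simp: E_def)
  also have "\<dots> = 2 ^ L"
    using card_lists_length_eq[of "UNIV::bool set" L] by simp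
  finally show ?thesis .
qed

lemma kraft:
  assumes pc: "prefix_code c"
  shows "(\<Sum>i<K. (1/2::real) ^ length (c i)) \<le> 1"
proof -
  define L where "L = Max ((\<lambda>i. length (c i)) ` {..<K})"
  have le: "\<forall>i<K. length (c i) \<le> L" unfolding L_def by (auto intro: Max_ge)
  have "(\<Sum>i<K. (2::nat) ^ (L - length (c i))) \<le> 2 ^ L" using kraft_nat[OF pc le] .
  then have "(\<Sum>i<K. (2::real) ^ (L - length (c i))) \<le> 2 ^ L"
  proof -
    have "real (\<Sum>i<K. (2::nat) ^ (L - length (c i))) \<le> real (2 ^ L)"
      using \<open>(\<Sum>i<K. (2::nat) ^ (L - length (c i))) \<le> 2 ^ L\<close> of_nat_le_iff by blast
    then show ?thesis by (simp add: of_nat_sum)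
  qed
  moreover have "(\<Sum>i<K. (2::real) ^ (L - length (c i))) = 2 ^ L * (\<Sum>i<K. (1/2::real) ^ length (c i))"
    unfolding sum_distrib_left
  proof (intro sum.cong refl)
    fix i assume "i \<in> {..<K}"
    then have "length (c i) \<le> L" using le by auto
    then show "(2::real) ^ (L - length (c i)) = 2 ^ L * (1 / 2) ^ length (c i)"
      by (simp add: power_diff power_one_over)
  qed
  ultimately show ?thesis by simp
qed




definition bits :: "nat \<Rightarrow> nat \<Rightarrow> bool list" where
  "bits N L = map (\<lambda>k. odd (N div 2 ^ (L - 1 - k))) [0..<L]"

lemma length_bits[simp]: "length (bits N L) = L" by (simp add: bits_def)

lemma take_bits:
  assumes "k \<le> L"
  shows "take k (bits N L) = bits (N div 2 ^ (L - k)) k"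
proof -
  have "take k (bits N L) = map (\<lambda>j. odd (N div 2 ^ (L - 1 - j))) [0..<k]"
    unfolding bits_def using assms by (simp add: take_map)
  also have "\<dots> = bits (N div 2 ^ (L - k)) k"
    unfolding bits_def
  proof (intro map_cong refl)
    fix j assume "j \<in> set [0..<k]"
    then have "j < k" by simp
    then have "L - 1 - j = (L - k) + (k - 1 - j)" using assms by simp
    then show "odd (N div 2 ^ (L - 1 - j)) = odd (N div 2 ^ (L - k) div 2 ^ (k - 1 - j))"
      by (simp add: power_add div_mult2_eq)
  qed
  finally show ?thesis .
qed

lemma bits_inj:
  assumes "N < 2 ^ L" "M < 2 ^ L" "bits N L = bits M L"
  shows "N = M"
proof -
  have "bit N t = bit M t" for t
  proof (cases "t < L")
    case True
    have "bits N L ! (L - 1 - t) = bits M L ! (L - 1 - t)" using assms(3) by simp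
    moreover have "L - 1 - (L - 1 - t) = t" using True by simp
    ultimately show ?thesis using True by (simp add: bits_def bit_iff_odd)
  next
    case False
    then have "(2::nat) ^ L \<le> 2 ^ t" by simp
    then have "N div 2 ^ t = 0" "M div 2 ^ t = 0" using assms(1,2) by (intro div_less; linarith)+
    then show ?thesis by (simp add: bit_iff_odd)
  qed
  then show ?thesis by (simp add: bit_eq_iff)
qed

lemma code_exists:
  fixes n :: "nat \<Rightarrow> nat"
  assumes mono: "mono n" and kr: "\<And>K. (\<Sum>i<K. (1/2::real) ^ n i) \<le> 1"
  shows "prefix_code_lengths n"
proof -
  define N where "N = rec_nat (0::nat) (\<lambda>i x. (x + 1) * 2 ^ (n (Suc i) - n i))"
  have N0: "N 0 = 0" and NS: "\<And>i. N (Suc i) = (N i + 1) * 2 ^ (n (Suc i) - n i)"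
    by (simp_all add: N_def)
  have monoS: "n i \<le> n (Suc i)" for i using mono by (simp add: monoD)
  have Nreal: "real (N i) = 2 ^ n i * (\<Sum>j<i. (1/2::real) ^ n j)" for i
  proof (induction i)
    case 0 then show ?case by (simp add: N0)
  next
    case (Suc i)
    have e: "(2::real) ^ n (Suc i) = 2 ^ (n (Suc i) - n i) * 2 ^ n i"
      using monoS[of i] by (simp add: power_add[symmetric])
    have "real (N (Suc i)) = (real (N i) + 1) * 2 ^ (n (Suc i) - n i)" by (simp add: NS ring_distribs)
    also have "\<dots> = 2 ^ n (Suc i) * (\<Sum>j<Suc i. (1/2::real) ^ n j)"
    proof -
      have h: "(2::real) ^ n i * (1/2) ^ n i = 1" by (simp add: power_one_over)
      show ?thesis unfolding Suc e sum.lessThan_Suc distrib_left distrib_right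
        using h by (simp add: mult.assoc)
    qed
    finally show ?case .
  qed
  have Nlt: "N i < 2 ^ n i" for i
  proof -
    have "(\<Sum>j<i. (1/2::real) ^ n j) < (\<Sum>j<Suc i. (1/2::real) ^ n j)" by simp
    also have "\<dots> \<le> 1" by (rule kr)
    finally have "real (N i) < 2 ^ n i" unfolding Nreal by simp
    then show ?thesis by (metis of_nat_less_iff of_nat_numeral of_nat_power)
  qed
  have Ngrow: "(N j + 1) * 2 ^ (n i - n j) \<le> N i" if "j < i" for i j
    using that
  proof (induction i)
    case 0 then show ?case by simp
  next
    case (Suc i)
    show ?case
    proof (cases "j = i")
      case True then show ?thesis by (simp add: NS)
    next
      case False
      then have ji: "j < i" using Suc by simp
      have mj: "n j \<le> n i" using mono ji by (simp add: monoD)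
      have "(N j + 1) * 2 ^ (n (Suc i) - n j) = (N j + 1) * 2 ^ (n i - n j) * 2 ^ (n (Suc i) - n i)"
      proof -
        have "n (Suc i) - n j = (n i - n j) + (n (Suc i) - n i)" using mj monoS[of i] by simp
        then have pw: "(2::nat) ^ (n (Suc i) - n j) = 2 ^ (n i - n j) * 2 ^ (n (Suc i) - n i)"
          by (simp add: power_add)
        show ?thesis by (simp only: pw mult.assoc)
      qed
      also have "\<dots> \<le> N i * 2 ^ (n (Suc i) - n i)" using Suc.IH[OF ji] by simp
      also have "\<dots> \<le> N (Suc i)" by (simp add: NS)
      finally show ?thesis .
    qed
  qed
  define c where "c i = bits (N i) (n i)" for i
  have "prefix_code c"
    unfolding prefix_code_def
  proof (intro allI impI notI)
    fix i j assume ij: "i \<noteq> j" and p: "prefix (c i) (c j)"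
    have le: "n i \<le> n j" using prefix_length_le[OF p] by (simp add: c_def)
    have tk: "take (n i) (c j) = c i" using p by (auto simp: prefix_def c_def)
    show False
    proof (cases "i < j")
      case True
      have "bits (N j div 2 ^ (n j - n i)) (n i) = bits (N i) (n i)"
        using tk take_bits[OF le] by (simp add: c_def)
      moreover have "N j div 2 ^ (n j - n i) < 2 ^ n i"
        using Nlt[of j] le by (simp add: less_mult_imp_div_less power_add[symmetric] div_less_iff_less_mult)
      ultimately have "N j div 2 ^ (n j - n i) = N i" using bits_inj Nlt by blast
      moreover have "N i + 1 \<le> N j div 2 ^ (n j - n i)"
        using Ngrow[OF True] by (simp add: less_eq_div_iff_mult_less_eq)
      ultimately show False by simp
    next
      case False
      then have "j < i" using ij by simp
      then have "n j \<le> n i" using mono by (simp add: monoD)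
      then have "n i = n j" using le by simp
      then have "bits (N j) (n j) = bits (N i) (n i)" using tk by (simp add: c_def)
      then have "N j = N i" using bits_inj Nlt \<open>n i = n j\<close> by metis
      moreover have "(N j + 1) * 2 ^ (n i - n j) \<le> N i" using Ngrow[OF \<open>j < i\<close>] .
      ultimately show False using \<open>n i = n j\<close> by simp
    qed
  qed
  then show ?thesis unfolding prefix_code_lengths_def by (intro exI[of _ c]) (simp add: c_def)
qed




definition phi :: "real \<Rightarrow> real" where "phi x = 2 powr (- of_int \<lfloor>x\<rfloor>)"
definition Phi :: "real \<Rightarrow> real" where "Phi x = 2 powr (- of_int \<lfloor>x\<rfloor>) * (2 - (x - of_int \<lfloor>x\<rfloor>))"

lemma phi_pos: "phi x > 0" by (simp add: phi_def)
lemma Phi_pos: "Phi x > 0"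
proof -
  have "x - of_int \<lfloor>x\<rfloor> < 1" by linarith
  then show ?thesis by (simp add: Phi_def)
qed

lemma Phi_le: "Phi x \<le> 2 * 2 powr (1 - x)"
proof -
  have "2 powr (- of_int \<lfloor>x\<rfloor>) \<le> 2 powr (1 - x)" by (intro powr_mono) linarith+
  moreover have "2 - (x - of_int \<lfloor>x\<rfloor>) \<le> 2" by linarith
  moreover have "2 - (x - of_int \<lfloor>x\<rfloor>) \<ge> 0" by linarith
  ultimately show ?thesis unfolding Phi_def
    by (metis mult.commute mult_mono powr_ge_zero)
qed

lemma Phi_step:
  assumes "s \<le> t" "t \<le> s + 1"
  shows "(t - s) * phi t \<le> Phi s - Phi t \<and> Phi s - Phi t \<le> (t - s) * phi s"
proof -
  define k where "k = \<lfloor>s\<rfloor>"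
  define p where "p = (2::real) powr (- of_int k)"
  have p: "p > 0" by (simp add: p_def)
  have ks: "of_int k \<le> s" "s < of_int k + 1" unfolding k_def by linarith+
  have "\<lfloor>t\<rfloor> = k \<or> \<lfloor>t\<rfloor> = k + 1"
    using assms ks by (smt (verit) floor_eq_iff of_int_1 of_int_add)
  then show ?thesis
  proof
    assume ft: "\<lfloor>t\<rfloor> = k"
    have "Phi s - Phi t = (t - s) * p" by (simp add: Phi_def ft k_def[symmetric] p_def algebra_simps)
    moreover have "phi s = p" "phi t = p" by (simp_all add: phi_def ft k_def[symmetric] p_def)
    ultimately show ?thesis by simp
  next
    assume ft: "\<lfloor>t\<rfloor> = k + 1"
    have tk: "of_int k + 1 \<le> t" using ft by linarith
    have p2: "(2::real) powr (- of_int (k + 1)) = p / 2"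
    proof -
      have "(2::real) powr (- of_int (k + 1)) = 2 powr (- of_int k - 1)" by simp
      also have "\<dots> = 2 powr (- of_int k) / 2 powr 1" by (rule powr_diff)
      also have "\<dots> = p / 2" by (simp add: p_def)
      finally show ?thesis .
    qed
    have e1: "Phi s - Phi t = p * ((1 + of_int k - 2 * s + t) / 2)"
      unfolding Phi_def ft k_def[symmetric] p2 by (simp add: p_def[symmetric] algebra_simps)
    have e2: "phi s = p" by (simp add: phi_def k_def[symmetric] p_def)
    have e3: "phi t = p / 2" by (simp only: phi_def ft p2)
    have i1: "(t - s) * (p / 2) \<le> p * ((1 + of_int k - 2 * s + t) / 2)"
    proof -
      have "(t - s) / 2 \<le> (1 + of_int k - 2 * s + t) / 2" using ks by simp
      then have "p * ((t - s) / 2) \<le> p * ((1 + of_int k - 2 * s + t) / 2)" using p by (intro mult_left_mono) auto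
      then show ?thesis by (simp add: algebra_simps)
    qed
    have i2: "p * ((1 + of_int k - 2 * s + t) / 2) \<le> (t - s) * p"
    proof -
      have "(1 + of_int k - 2 * s + t) / 2 \<le> t - s" using tk by simp
      then have "p * ((1 + of_int k - 2 * s + t) / 2) \<le> p * (t - s)" using p by (intro mult_left_mono) auto
      then show ?thesis by (simp add: algebra_simps)
    qed
    show ?thesis unfolding e1 e2 e3 using i1 i2 by linarith
  qed
qed

lemma lowS:
  assumes "0 < a" "a \<le> 1"
  shows "Phi x - Phi (x + real K * a) \<le> a * (\<Sum>i<K. phi (x + real i * a))"
proof (induction K)
  case 0 then show ?case by simp
next
  case (Suc K)
  have "Phi (x + real K * a) - Phi (x + real (Suc K) * a) \<le> a * phi (x + real K * a)"
    using Phi_step[of "x + real K * a" "x + real (Suc K) * a"] assms by (simp add: algebra_simps)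
  then show ?case using Suc by (simp add: algebra_simps)
qed

lemma upS:
  assumes "0 < a" "a \<le> 1"
  shows "a * (\<Sum>i<K. phi (x + real i * a)) + a * phi (x + real K * a) \<le> a * phi x + Phi x - Phi (x + real K * a)"
proof (induction K)
  case 0 then show ?case by simp
next
  case (Suc K)
  have "a * phi (x + real (Suc K) * a) \<le> Phi (x + real K * a) - Phi (x + real (Suc K) * a)"
    using Phi_step[of "x + real K * a" "x + real (Suc K) * a"] assms by (simp add: algebra_simps)
  then show ?case using Suc by (simp add: algebra_simps)
qed

lemma upS':
  assumes "0 < a" "a \<le> 1"
  shows "a * (\<Sum>i<K. phi (x + real i * a)) \<le> a * phi x + Phi x"
  using upS[OF assms, where K=K and x=x] Phi_pos[of "x + real K * a"] phi_pos[of "x + real K * a"] assms(1)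
  by (smt (verit) mult_pos_pos)

lemma Phi_small:
  assumes "0 < a" "0 < \<delta>"
  shows "\<exists>K. Phi (x + real K * a) < \<delta>"
proof -
  obtain T where T: "2 * 2 powr (1 - T) < \<delta>"
  proof
    have "(2::real) powr (1 - (3 - log 2 \<delta>)) = 2 powr (log 2 \<delta>) / 2 powr 2"
      by (subst powr_diff[symmetric]) simp
    also have "\<dots> = \<delta> / 4" using assms by simp
    finally show "2 * 2 powr (1 - (3 - log 2 \<delta>)) < \<delta>" using assms by simp
  qed
  obtain K :: nat where K: "T - x < real K * a"
    using reals_Archimedean3[OF assms(1)] by blast
  have "Phi (x + real K * a) \<le> 2 * 2 powr (1 - (x + real K * a))" by (rule Phi_le)
  also have "\<dots> \<le> 2 * 2 powr (1 - T)" using K by (intro mult_left_mono powr_mono) auto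
  finally show ?thesis using T by (intro exI[of _ K]) simp
qed




lemma log_geom:
  assumes "0 < \<theta>" "\<theta> < 1"
  shows "log 2 (geom_p \<theta> i) = log 2 (1 - \<theta>) + real i * log 2 \<theta>"
  using assms by (simp add: geom_p_def log_mult log_nat_power)

lemma powr_nat_half: "(2::real) powr (- of_int (int m)) = (1/2) ^ m"
  by (simp add: powr_minus powr_realpow power_one_over inverse_eq_divide)

lemma UB:
  assumes th: "1/2 \<le> \<theta>" "\<theta> < 1"
  defines "a \<equiv> - log 2 \<theta>" and "b \<equiv> - log 2 (1 - \<theta>)"
  assumes cond: "Phi (R + b) \<le> a * (1 - phi (R + b))"
  shows "opt_max_redundancy \<theta> \<le> ereal R"
proof -
  define x where "x = R + b"
  have a0: "0 < a" unfolding a_def using th by simp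
  have a1: "a \<le> 1"
  proof -
    have "log 2 (1/2) \<le> log 2 \<theta>" using th by (subst log_le_cancel_iff) auto
    moreover have "log 2 (1/2::real) = -1" by (simp add: log_divide)
    ultimately show ?thesis by (simp add: a_def)
  qed
  have "0 < a * (1 - phi x)" using cond Phi_pos[of x] unfolding x_def by linarith
  then have "phi x < 1" using a0 by (simp add: zero_less_mult_iff)
  have fx: "\<lfloor>x\<rfloor> > 0"
  proof (rule ccontr)
    assume "\<not> \<lfloor>x\<rfloor> > 0"
    then have "0 \<le> - real_of_int \<lfloor>x\<rfloor>" by simp
    then have "1 \<le> phi x" unfolding phi_def by (intro ge_one_powr_ge_zero) auto
    with \<open>phi x < 1\<close> show False by simp
  qed
  define n where "n i = nat \<lfloor>x + real i * a\<rfloor>" for i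
  have fl: "\<lfloor>x + real i * a\<rfloor> \<ge> \<lfloor>x\<rfloor>" for i using a0 by (intro floor_mono) simp
  have nint: "int (n i) = \<lfloor>x + real i * a\<rfloor>" for i unfolding n_def by (rule nat_0_le) (use fl[of i] fx in linarith)
  have "mono n" unfolding mono_def n_def
    using a0 by (intro allI impI nat_mono floor_mono) (simp add: mult_right_mono)
  moreover have "(\<Sum>i<K. (1/2::real) ^ n i) \<le> 1" for K
  proof -
    have eq: "(1/2::real) ^ n i = phi (x + real i * a)" for i
      unfolding phi_def nint[symmetric] powr_nat_half ..
    have "a * (\<Sum>i<K. phi (x + real i * a)) \<le> a * phi x + Phi x" by (rule upS'[OF a0 a1])
    also have "\<dots> \<le> a" using cond unfolding x_def by (simp add: algebra_simps)
    finally have "(\<Sum>i<K. phi (x + real i * a)) \<le> 1" using a0 by simp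
    then show ?thesis unfolding eq .
  qed
  ultimately have pc: "prefix_code_lengths n" by (rule code_exists)
  have "max_redundancy n (geom_p \<theta>) \<le> ereal R"
    unfolding max_redundancy_def
  proof (rule SUP_least)
    fix i
    have "real (n i) \<le> x + real i * a" using nint[of i] by (metis of_int_floor_le of_int_of_nat_eq)
    then show "ereal (real (n i) + log 2 (geom_p \<theta> i)) \<le> ereal R"
      using th by (simp add: log_geom a_def b_def x_def)
  qed
  then show ?thesis unfolding opt_max_redundancy_def using pc by (intro INF_lower2) auto
qed

lemma LB:
  assumes th: "1/2 \<le> \<theta>" "\<theta> < 1"
  defines "a \<equiv> - log 2 \<theta>" and "b \<equiv> - log 2 (1 - \<theta>)"
  assumes cond: "Phi (L + b) > a"
  shows "ereal L \<le> opt_max_redundancy \<theta>"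
  unfolding opt_max_redundancy_def
proof (rule INF_greatest)
  fix n assume "n \<in> {n. prefix_code_lengths n}"
  then obtain c where pc: "prefix_code c" and len: "\<And>i. length (c i) = n i"
    unfolding prefix_code_lengths_def by auto
  define x where "x = L + b"
  have a0: "0 < a" unfolding a_def using th by simp
  have a1: "a \<le> 1"
  proof -
    have "log 2 (1/2) \<le> log 2 \<theta>" using th by (subst log_le_cancel_iff) auto
    moreover have "log 2 (1/2::real) = -1" by (simp add: log_divide)
    ultimately show ?thesis by (simp add: a_def)
  qed
  show "ereal L \<le> max_redundancy n (geom_p \<theta>)"
  proof (rule ccontr)
    assume "\<not> ereal L \<le> max_redundancy n (geom_p \<theta>)"
    then have lt: "max_redundancy n (geom_p \<theta>) < ereal L" by simp
    have ni: "int (n i) \<le> \<lfloor>x + real i * a\<rfloor>" for i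
    proof -
      have "ereal (real (n i) + log 2 (geom_p \<theta> i)) \<le> max_redundancy n (geom_p \<theta>)"
        unfolding max_redundancy_def by (rule SUP_upper) simp
      then have "ereal (real (n i) + log 2 (geom_p \<theta> i)) < ereal L" using lt by (rule le_less_trans)
      then have "real (n i) + log 2 (geom_p \<theta> i) < L" by simp
      then have "real (n i) < x + real i * a" using th by (simp add: log_geom a_def b_def x_def)
      then show ?thesis by (simp add: le_floor_iff)
    qed
    have S1: "(\<Sum>i<K. phi (x + real i * a)) \<le> 1" for K
    proof -
      have "(\<Sum>i<K. phi (x + real i * a)) \<le> (\<Sum>i<K. (1/2::real) ^ length (c i))"
      proof (intro sum_mono)
        fix i
        have "phi (x + real i * a) \<le> 2 powr (- of_int (int (n i)))"
          unfolding phi_def using ni[of i] by (intro powr_mono) auto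
        then show "phi (x + real i * a) \<le> (1/2) ^ length (c i)" unfolding len powr_nat_half .
      qed
      also have "\<dots> \<le> 1" by (rule kraft[OF pc])
      finally show ?thesis .
    qed
    obtain K where K: "Phi (x + real K * a) < Phi x - a"
      using Phi_small[OF a0, of "Phi x - a" x] cond unfolding x_def by auto
    have "Phi x - Phi (x + real K * a) \<le> a * (\<Sum>i<K. phi (x + real i * a))" by (rule lowS[OF a0 a1])
    also have "\<dots> \<le> a" using S1[of K] a0 by (simp add: mult_le_cancel_left1)
    finally show False using K by simp
  qed
qed




definition cc :: real where "cc = log 2 (exp 1)"

lemma cc_ln: "cc * ln 2 = 1" by (simp add: cc_def log_def)
lemma ln2_gt: "ln 2 > (1/2::real)"
proof -
  have "exp (1/2::real) * exp (1/2) = exp 1" by (simp add: exp_add[symmetric])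
  also have "\<dots> < 4" using exp_le by simp
  finally have h4: "exp (1/2::real) * exp (1/2) < 4" .
  have "exp (1/2::real) < 2"
  proof (rule ccontr)
    assume "\<not> exp (1/2::real) < 2"
    then have "2 \<le> exp (1/2::real)" by simp
    then have "2 * 2 \<le> exp (1/2::real) * exp (1/2)" by (intro mult_mono) auto
    with h4 show False by simp
  qed
  then have "ln (exp (1/2::real)) < ln 2" by (subst ln_less_cancel_iff) auto
  then show ?thesis by simp
qed
lemma cc_eq: "cc = 1 / ln 2" using cc_ln by (simp add: field_simps)
lemma cc_gt1: "cc > 1" unfolding cc_eq using ln_2_less_1 by (simp add: field_simps)
lemma cc_lt2: "cc < 2" unfolding cc_eq using ln2_gt by (simp add: field_simps)

lemma log_cc: "log 2 \<theta> = ln \<theta> * cc" by (simp add: log_def cc_def)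

lemma a_lower:
  assumes "0 < \<theta>" "\<theta> < 1"
  shows "(1 - \<theta>) * cc \<le> - log 2 \<theta>"
proof -
  have "ln \<theta> \<le> \<theta> - 1" using assms(1) by (rule ln_le_minus_one)
  then have "(1 - \<theta>) * cc \<le> (- ln \<theta>) * cc" using cc_gt1 by (intro mult_right_mono) auto
  then show ?thesis by (simp add: log_cc)
qed

lemma a_upper:
  assumes "0 < \<theta>" "\<theta> < 1"
  shows "- log 2 \<theta> \<le> (1 - \<theta>) * cc / \<theta>"
proof -
  have "ln (1/\<theta>) \<le> 1/\<theta> - 1" using assms by (intro ln_le_minus_one) auto
  then have "- ln \<theta> \<le> (1 - \<theta>) / \<theta>" using assms by (simp add: ln_div field_simps)
  then have "(- ln \<theta>) * cc \<le> ((1 - \<theta>) / \<theta>) * cc" using cc_gt1 by (intro mult_right_mono) auto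
  then show ?thesis by (simp add: log_cc)
qed

definition psi :: "real \<Rightarrow> real" where "psi r = 2 powr r * (2 - r)"

lemma psi_upper:
  shows "psi r \<le> cc * 2 powr (2 - cc)"
proof -
  define y where "y = 2 - cc - r"
  have "1 + y * ln 2 \<le> exp (y * ln 2)" by (rule exp_ge_add_one_self)
  also have "exp (y * ln 2) = 2 powr y" by (simp add: powr_def)
  finally have "cc * (1 + y * ln 2) \<le> cc * 2 powr y" using cc_gt1 by (intro mult_left_mono) auto
  moreover have "cc * (1 + y * ln 2) = cc + y" using cc_ln by (simp add: algebra_simps)
  ultimately have h: "2 - r \<le> cc * 2 powr y" by (simp add: y_def)
  have "psi r \<le> 2 powr r * (cc * 2 powr y)" unfolding psi_def using h by (intro mult_left_mono) auto
  also have "\<dots> = cc * (2 powr r * 2 powr y)" by simp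
  also have "2 powr r * 2 powr y = 2 powr (2 - cc)" by (simp add: powr_add[symmetric] y_def)
  finally show ?thesis .
qed

lemma psi_lower:
  assumes "0 \<le> r" "r \<le> 1"
  shows "2 \<le> psi r"
proof -
  define t where "t = 1 - r"
  have t: "0 \<le> t" "t \<le> 1" using assms by (auto simp: t_def)
  have "exp ((1 - t) *\<^sub>R 0 + t *\<^sub>R ln 2) \<le> (1 - t) * exp 0 + t * exp (ln 2)"
    using convex_onD[OF exp_convex, of t 0 "ln 2"] t by simp
  then have "2 powr t \<le> 1 + t" by (simp add: powr_def algebra_simps)
  then have h: "2 powr (1 - r) \<le> 2 - r" by (simp add: t_def)
  have "2 = 2 powr r * 2 powr (1 - r)" by (simp add: powr_add[symmetric])
  also have "\<dots> \<le> 2 powr r * (2 - r)" using h by (intro mult_left_mono) auto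
  finally show ?thesis by (simp add: psi_def)
qed

lemma Phi_decomp:
  assumes "0 < \<theta>" "\<theta> < 1"
  defines "b \<equiv> - log 2 (1 - \<theta>)"
  shows "Phi (R + b) = (1 - \<theta>) * 2 powr (- R) * psi ((R + b) - of_int \<lfloor>R + b\<rfloor>)"
    and "0 \<le> (R + b) - of_int \<lfloor>R + b\<rfloor>" "(R + b) - of_int \<lfloor>R + b\<rfloor> \<le> 1"
    and "phi (R + b) \<le> 2 powr (1 - R) * (1 - \<theta>)"
proof -
  define x where "x = R + b"
  define r where "r = x - of_int \<lfloor>x\<rfloor>"
  have pb: "2 powr (- b) = 1 - \<theta>" unfolding b_def using assms by simp
  have "2 powr (- of_int \<lfloor>x\<rfloor>) = 2 powr r * 2 powr (- R) * 2 powr (- b)"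
    by (simp add: powr_add[symmetric] r_def x_def)
  then have e: "2 powr (- of_int \<lfloor>x\<rfloor>) = (1 - \<theta>) * 2 powr (- R) * 2 powr r" by (simp add: pb)
  show "Phi (R + b) = (1 - \<theta>) * 2 powr (- R) * psi ((R + b) - of_int \<lfloor>R + b\<rfloor>)"
    unfolding x_def[symmetric] r_def[symmetric] Phi_def psi_def e by (simp add: r_def)
  show "0 \<le> (R + b) - of_int \<lfloor>R + b\<rfloor>" "(R + b) - of_int \<lfloor>R + b\<rfloor> \<le> 1" by linarith+
  have "phi x \<le> 2 powr (1 - x)" unfolding phi_def by (intro powr_mono) linarith+
  also have "2 powr (1 - x) = 2 powr (1 - R) * 2 powr (- b)"
  proof -
    have "1 - x = (1 - R) + (- b)" by (simp add: x_def)
    then show ?thesis by (simp only: powr_add)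
  qed
  finally show "phi (R + b) \<le> 2 powr (1 - R) * (1 - \<theta>)" by (simp add: pb x_def)
qed




lemma pow_half_small: "0 < (\<delta>::real) \<Longrightarrow> \<exists>N. (1/2::real) ^ N < \<delta>"
  by (rule real_arch_pow_inv) auto

lemma powr_neg_nat: "(2::real) powr (- real N) = (1/2) ^ N"
  by (simp add: powr_minus powr_realpow power_one_over inverse_eq_divide)

lemma evU:
  assumes "y > 2 - cc"
  shows "eventually (\<lambda>\<theta>. opt_max_redundancy \<theta> < ereal y) (at_left 1)"
proof -
  define R where "R = (2 - cc + y) / 2"
  define \<epsilon> where "\<epsilon> = R - (2 - cc)"
  have \<epsilon>: "\<epsilon> > 0" using assms by (simp add: R_def \<epsilon>_def)
  define \<eta> where "\<eta> = 1 - 2 powr (- \<epsilon>)"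
  have \<eta>: "0 < \<eta>" unfolding \<eta>_def using powr_less_one[of 2 "- \<epsilon>"] \<epsilon> by simp
  define m where "m = max (1/2) (1 - \<eta> / 2 powr (1 - R))"
  have "m < 1" unfolding m_def using \<eta> by simp
  then have "eventually (\<lambda>\<theta>. \<theta> \<in> {m<..<1}) (at_left 1)" by (rule eventually_at_left_real)
  then show ?thesis
  proof (rule eventually_mono)
    fix \<theta> :: real assume "\<theta> \<in> {m<..<1}"
    then have th: "1/2 \<le> \<theta>" "\<theta> < 1" "1 - \<eta> / 2 powr (1 - R) < \<theta>" unfolding m_def by auto
    have th0: "0 < \<theta>" using th by simp
    define b where "b = - log 2 (1 - \<theta>)"
    define r where "r = (R + b) - of_int \<lfloor>R + b\<rfloor>"
    define a where "a = - log 2 \<theta>"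
    have P: "Phi (R + b) = (1 - \<theta>) * 2 powr (- R) * psi r"
      using Phi_decomp(1)[OF th0 th(2), of R] unfolding b_def r_def by simp
    have ph: "phi (R + b) \<le> 2 powr (1 - R) * (1 - \<theta>)"
      using Phi_decomp(4)[OF th0 th(2), of R] unfolding b_def by simp
    have "2 powr (1 - R) * (1 - \<theta>) < \<eta>"
      using th(3) by (simp add: field_simps)
    with ph have ph2: "2 powr (- \<epsilon>) \<le> 1 - phi (R + b)" unfolding \<eta>_def by simp
    have "2 powr (- R) * psi r \<le> 2 powr (- R) * (cc * 2 powr (2 - cc))"
      by (intro mult_left_mono psi_upper) simp
    also have "\<dots> = cc * (2 powr (- R) * 2 powr (2 - cc))" by simp
    also have "2 powr (- R) * 2 powr (2 - cc) = 2 powr (- \<epsilon>)"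
      by (simp add: powr_add[symmetric] \<epsilon>_def)
    finally have "2 powr (- R) * psi r \<le> cc * 2 powr (- \<epsilon>)" .
    then have "Phi (R + b) \<le> (1 - \<theta>) * (cc * 2 powr (- \<epsilon>))"
      unfolding P mult.assoc using th by (intro mult_left_mono) auto
    also have "\<dots> \<le> (1 - \<theta>) * (cc * (1 - phi (R + b)))"
      using th cc_gt1 ph2 by (intro mult_left_mono) auto
    also have "\<dots> = ((1 - \<theta>) * cc) * (1 - phi (R + b))" by simp
    also have "\<dots> \<le> a * (1 - phi (R + b))"
    proof (rule mult_right_mono)
      show "(1 - \<theta>) * cc \<le> a" unfolding a_def by (rule a_lower[OF th0 th(2)])
      show "0 \<le> 1 - phi (R + b)" using ph2 by (smt (verit) powr_ge_zero)
    qed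
    finally have "Phi (R + b) \<le> a * (1 - phi (R + b))" .
    then have "opt_max_redundancy \<theta> \<le> ereal R"
      using UB[OF th(1) th(2), of R] unfolding a_def b_def by simp
    also have "ereal R < ereal y" using assms by (simp add: R_def)
    finally show "opt_max_redundancy \<theta> < ereal y" .
  qed
qed

lemma evL:
  assumes "y < 1 - log 2 cc"
  shows "eventually (\<lambda>\<theta>. ereal y < opt_max_redundancy \<theta>) (at_left 1)"
proof -
  define L where "L = (y + (1 - log 2 cc)) / 2"
  define \<epsilon> where "\<epsilon> = (1 - log 2 cc) - L"
  have \<epsilon>: "\<epsilon> > 0" using assms by (simp add: L_def \<epsilon>_def)
  define m where "m = max (1/2) (2 powr (- \<epsilon>))"
  have "m < 1" unfolding m_def using powr_less_one[of 2 "- \<epsilon>"] \<epsilon> by simp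
  then have "eventually (\<lambda>\<theta>. \<theta> \<in> {m<..<1}) (at_left 1)" by (rule eventually_at_left_real)
  then show ?thesis
  proof (rule eventually_mono)
    fix \<theta> :: real assume "\<theta> \<in> {m<..<1}"
    then have th: "1/2 \<le> \<theta>" "\<theta> < 1" "2 powr (- \<epsilon>) < \<theta>" unfolding m_def by auto
    have th0: "0 < \<theta>" using th by simp
    define b where "b = - log 2 (1 - \<theta>)"
    define r where "r = (L + b) - of_int \<lfloor>L + b\<rfloor>"
    define a where "a = - log 2 \<theta>"
    have P: "Phi (L + b) = (1 - \<theta>) * 2 powr (- L) * psi r"
      using Phi_decomp(1)[OF th0 th(2), of L] unfolding b_def r_def by simp
    have r01: "0 \<le> r" "r \<le> 1" using Phi_decomp(2,3)[OF th0 th(2), of L] unfolding b_def r_def by simp_all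
    have e2: "2 powr (- L) * 2 = cc * 2 powr \<epsilon>"
    proof -
      have "2 powr (- L) * 2 = 2 powr (1 + - L)"
        using powr_mult_base[of 2 "- L"] by (simp add: mult.commute)
      also have "1 + - L = log 2 cc + \<epsilon>" by (simp add: \<epsilon>_def)
      finally have "2 powr (- L) * 2 = 2 powr (log 2 cc + \<epsilon>)" .
      also have "\<dots> = cc * 2 powr \<epsilon>" using cc_gt1 by (simp add: powr_add)
      finally show ?thesis .
    qed
    have ct: "0 < (1 - \<theta>) * cc" using th cc_gt1 by simp
    have "1 < \<theta> * 2 powr \<epsilon>"
    proof -
      have "2 powr (- \<epsilon>) * 2 powr \<epsilon> < \<theta> * 2 powr \<epsilon>" using th(3) by simp
      then show ?thesis by (simp add: powr_add[symmetric])
    qed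
    then have "1 / \<theta> < 2 powr \<epsilon>" using th0 by (simp add: field_simps)
    have "a \<le> (1 - \<theta>) * cc / \<theta>" unfolding a_def by (rule a_upper[OF th0 th(2)])
    also have "\<dots> = ((1 - \<theta>) * cc) * (1 / \<theta>)" by simp
    also have "\<dots> < ((1 - \<theta>) * cc) * 2 powr \<epsilon>"
      using \<open>1 / \<theta> < 2 powr \<epsilon>\<close> ct by (intro mult_strict_left_mono) auto
    also have "\<dots> = (1 - \<theta>) * (2 powr (- L) * 2)" unfolding e2 by simp
    also have "\<dots> \<le> (1 - \<theta>) * (2 powr (- L) * psi r)"
      using th psi_lower[OF r01] by (intro mult_left_mono) auto
    also have "\<dots> = Phi (L + b)" unfolding P by simp
    finally have "a < Phi (L + b)" .
    then have "ereal L \<le> opt_max_redundancy \<theta>"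
      using LB[OF th(1) th(2), of L] unfolding a_def b_def by simp
    moreover have "ereal y < ereal L" using assms by (simp add: L_def)
    ultimately show "ereal y < opt_max_redundancy \<theta>" by (meson less_le_trans)
  qed
qed




lemma frU:
  assumes "y > 1 - log 2 cc" "m < 1"
  shows "\<exists>\<theta>. m < \<theta> \<and> \<theta> < 1 \<and> opt_max_redundancy \<theta> < ereal y"
proof -
  define R where "R = (1 - log 2 cc + y) / 2"
  define \<epsilon> where "\<epsilon> = R - (1 - log 2 cc)"
  have \<epsilon>: "\<epsilon> > 0" using assms by (simp add: R_def \<epsilon>_def)
  have key: "2 powr R * cc = 2 * 2 powr \<epsilon>"
  proof -
    have "R = (1 + \<epsilon>) - log 2 cc" by (simp add: \<epsilon>_def)
    then have "2 powr R = 2 powr (1 + \<epsilon>) / 2 powr (log 2 cc)" by (simp add: powr_diff)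
    also have "\<dots> = 2 * 2 powr \<epsilon> / cc" using cc_gt1 by (simp add: powr_add)
    finally show ?thesis using cc_gt1 by simp
  qed
  define m' where "m' = max m (1/2)"
  have m': "m' < 1" "m \<le> m'" "1/2 \<le> m'" using assms by (auto simp: m'_def)
  define \<delta> where "\<delta> = min ((1 - m') / 2 powr R) (1 - 2 powr (- \<epsilon>))"
  have "\<delta> > 0" unfolding \<delta>_def using m' powr_less_one[of 2 "- \<epsilon>"] \<epsilon> by simp
  then obtain N where N: "(1/2::real) ^ N < \<delta>" using pow_half_small by blast
  define u where "u = (1/2::real) ^ N"
  have u0: "0 < u" by (simp add: u_def)
  have u1: "2 powr R * u < 1 - m'" using N unfolding u_def \<delta>_def by (simp add: field_simps)
  have u2: "2 powr (- \<epsilon>) < 1 - u" using N unfolding u_def \<delta>_def by simp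
  define \<theta> where "\<theta> = 1 - 2 powr R * u"
  have th: "m' < \<theta>" "\<theta> < 1" using u1 u0 by (simp_all add: \<theta>_def)
  have th0: "0 < \<theta>" "1/2 \<le> \<theta>" using th m' by simp_all
  define b where "b = - log 2 (1 - \<theta>)"
  have "log 2 (1 - \<theta>) = R + log 2 u" unfolding \<theta>_def using u0 by (simp add: log_mult)
  moreover have "log 2 u = - real N" unfolding u_def by (simp add: log_nat_power log_divide)
  ultimately have xb: "R + b = real N" by (simp add: b_def)
  have Phi_x: "Phi (R + b) = 2 * u" unfolding xb Phi_def u_def
    using powr_neg_nat[of N] by simp
  have phi_x: "phi (R + b) = u" unfolding xb phi_def u_def using powr_neg_nat[of N] by simp
  define a where "a = - log 2 \<theta>"
  have "(1 - \<theta>) * cc \<le> a" unfolding a_def by (rule a_lower[OF th0(1) th(2)])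
  moreover have "(1 - \<theta>) * cc = 2 * 2 powr \<epsilon> * u" unfolding \<theta>_def using key by (simp add: algebra_simps)
  ultimately have ag: "2 * 2 powr \<epsilon> * u \<le> a" by simp
  have "1 \<le> 2 powr \<epsilon> * (1 - u)"
  proof -
    have "2 powr \<epsilon> * 2 powr (- \<epsilon>) \<le> 2 powr \<epsilon> * (1 - u)" using u2 by (intro mult_left_mono) auto
    then show ?thesis by (simp add: powr_add[symmetric])
  qed
  then have "2 * u \<le> (2 * u) * (2 powr \<epsilon> * (1 - u))" using u0 by simp
  also have "\<dots> = (2 * 2 powr \<epsilon> * u) * (1 - u)" by (simp add: algebra_simps)
  also have "\<dots> \<le> a * (1 - u)"
  proof (rule mult_right_mono)
    show "2 * 2 powr \<epsilon> * u \<le> a" by (rule ag)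
    have "0 < 2 powr (- \<epsilon>)" by simp
    then show "0 \<le> 1 - u" using u2 by linarith
  qed
  finally have "Phi (R + b) \<le> a * (1 - phi (R + b))" unfolding Phi_x phi_x .
  then have "opt_max_redundancy \<theta> \<le> ereal R"
    using UB[OF th0(2) th(2), of R] unfolding a_def b_def by simp
  also have "ereal R < ereal y" using assms by (simp add: R_def)
  finally show ?thesis using th m' by (intro exI[of _ \<theta>]) auto
qed

lemma frL:
  assumes "y < 2 - cc" "m < 1"
  shows "\<exists>\<theta>. m < \<theta> \<and> \<theta> < 1 \<and> ereal y < opt_max_redundancy \<theta>"
proof -
  define L where "L = (y + (2 - cc)) / 2"
  define \<epsilon> where "\<epsilon> = (2 - cc) - L"
  have \<epsilon>: "\<epsilon> > 0" using assms by (simp add: L_def \<epsilon>_def)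
  define q where "q = 2 powr (- \<epsilon>)"
  have q: "0 < q" "q < 1" unfolding q_def using powr_less_one[of 2 "- \<epsilon>"] \<epsilon> by simp_all
  have q1: "q * 2 powr \<epsilon> = 1" unfolding q_def by (simp add: powr_add[symmetric])
  have e1: "2 powr \<epsilon> - 1 > 0" using \<epsilon> by simp
  define m' where "m' = max m (1/2)"
  have m': "m' < 1" "m \<le> m'" "1/2 \<le> m'" using assms by (auto simp: m'_def)
  define \<delta> where "\<delta> = min (1 - m') (2 powr \<epsilon> - 1)"
  have "\<delta> > 0" unfolding \<delta>_def using m' e1 by simp
  then obtain N where N: "(1/2::real) ^ N < \<delta>" using pow_half_small by blast
  define u where "u = (1/2::real) ^ N"
  have u0: "0 < u" by (simp add: u_def)
  have u1: "u < 1 - m'" "u < 2 powr \<epsilon> - 1" using N unfolding u_def \<delta>_def by simp_all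
  have qu: "q * u < u" using q u0 by simp
  define \<theta> where "\<theta> = 1 - q * u"
  have "0 < q * u" using q u0 by simp
  then have th: "m' < \<theta>" "\<theta> < 1" unfolding \<theta>_def using u1 qu by linarith+
  have th0: "0 < \<theta>" "1/2 \<le> \<theta>" using th m' by simp_all
  have qth: "q < \<theta>"
  proof -
    have "q * (1 + u) < q * 2 powr \<epsilon>" using u1(2) q by (intro mult_strict_left_mono) auto
    then show ?thesis unfolding \<theta>_def q1 by (simp add: algebra_simps)
  qed
  define b where "b = - log 2 (1 - \<theta>)"
  have "log 2 (1 - \<theta>) = log 2 q + log 2 u" unfolding \<theta>_def using u0 q by (simp add: log_mult)
  moreover have "log 2 u = - real N" unfolding u_def by (simp add: log_nat_power log_divide)
  moreover have "log 2 q = - \<epsilon>" unfolding q_def by simp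
  ultimately have xb: "L + b = (2 - cc) + real N" by (simp add: b_def \<epsilon>_def)
  have fl: "\<lfloor>L + b\<rfloor> = int N" unfolding xb using cc_gt1 cc_lt2 by (simp add: floor_eq_iff)
  have Phi_x: "Phi (L + b) = u * cc" unfolding Phi_def fl
    using powr_neg_nat[of N] by (simp add: u_def xb)
  define a where "a = - log 2 \<theta>"
  have "a \<le> (1 - \<theta>) * cc / \<theta>" unfolding a_def by (rule a_upper[OF th0(1) th(2)])
  also have "\<dots> = (u * cc) * (q / \<theta>)" unfolding \<theta>_def by (simp add: algebra_simps)
  also have "\<dots> < (u * cc) * 1" using qth th0 u0 cc_gt1 by (intro mult_strict_left_mono) auto
  finally have "a < Phi (L + b)" unfolding Phi_x by simp
  then have "ereal L \<le> opt_max_redundancy \<theta>"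
    using LB[OF th0(2) th(2), of L] unfolding a_def b_def by simp
  moreover have "ereal y < ereal L" using assms by (simp add: L_def)
  ultimately have "ereal y < opt_max_redundancy \<theta>" by (meson less_le_trans)
  then show ?thesis using th m' by (intro exI[of _ \<theta>]) auto
qed




lemma ev_at_left1:
  "eventually P (at_left (1::real)) \<Longrightarrow> \<exists>b<1. \<forall>y>b. y < 1 \<longrightarrow> P y"
  using eventually_at_left[of "0::real" 1 P] by simp

theorem mainTheorem7:
  shows "Liminf (at_left 1) opt_max_redundancy = ereal (1 - log 2 (log 2 (exp 1)))
     \<and> Limsup (at_left 1) opt_max_redundancy = ereal (2 - log 2 (exp 1))"
proof
  define L0 where "L0 = 1 - log 2 cc"
  have "ereal L0 \<le> Liminf (at_left 1) opt_max_redundancy"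
    unfolding le_Liminf_iff
  proof (intro allI impI)
    fix y assume "y < ereal L0"
    then obtain z where z: "y < ereal z" "ereal z < ereal L0" using ereal_dense2 by blast
    then have "z < 1 - log 2 cc" by (simp add: L0_def)
    from evL[OF this] show "eventually (\<lambda>x. y < opt_max_redundancy x) (at_left 1)"
      by (rule eventually_mono) (use z in \<open>meson less_trans\<close>)
  qed
  moreover have "Liminf (at_left 1) opt_max_redundancy \<le> ereal L0"
  proof (rule ccontr)
    assume "\<not> Liminf (at_left 1) opt_max_redundancy \<le> ereal L0"
    then have "ereal L0 < Liminf (at_left 1) opt_max_redundancy" by simp
    then obtain z where z: "ereal L0 < ereal z" "ereal z < Liminf (at_left 1) opt_max_redundancy"
      using ereal_dense2 by blast
    have "eventually (\<lambda>x. opt_max_redundancy x > ereal z) (at_left 1)" using less_LiminfD[OF z(2)] .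
    then obtain b where b: "b < 1" "\<forall>y>b. y < 1 \<longrightarrow> ereal z < opt_max_redundancy y"
      using ev_at_left1 by blast
    have "z > 1 - log 2 cc" using z(1) by (simp add: L0_def)
    from frU[OF this b(1)] obtain \<theta> where "b < \<theta>" "\<theta> < 1" "opt_max_redundancy \<theta> < ereal z" by blast
    with b(2) show False by fastforce
  qed
  ultimately show "Liminf (at_left 1) opt_max_redundancy = ereal (1 - log 2 (log 2 (exp 1)))"
    unfolding L0_def cc_def by (rule antisym[rotated])
next
  define M0 where "M0 = 2 - cc"
  have "Limsup (at_left 1) opt_max_redundancy \<le> ereal M0"
    unfolding Limsup_le_iff
  proof (intro allI impI)
    fix y assume "ereal M0 < y"
    then obtain z where z: "ereal M0 < ereal z" "ereal z < y" using ereal_dense2 by blast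
    then have "z > 2 - cc" by (simp add: M0_def)
    from evU[OF this] show "eventually (\<lambda>x. y > opt_max_redundancy x) (at_left 1)"
      by (rule eventually_mono) (use z in \<open>meson less_trans\<close>)
  qed
  moreover have "ereal M0 \<le> Limsup (at_left 1) opt_max_redundancy"
  proof (rule ccontr)
    assume "\<not> ereal M0 \<le> Limsup (at_left 1) opt_max_redundancy"
    then have "Limsup (at_left 1) opt_max_redundancy < ereal M0" by simp
    then obtain z where z: "Limsup (at_left 1) opt_max_redundancy < ereal z" "ereal z < ereal M0"
      using ereal_dense2 by blast
    have "eventually (\<lambda>x. opt_max_redundancy x < ereal z) (at_left 1)" using Limsup_lessD[OF z(1)] .
    then obtain b where b: "b < 1" "\<forall>y>b. y < 1 \<longrightarrow> opt_max_redundancy y < ereal z"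
      using ev_at_left1 by blast
    have "z < 2 - cc" using z(2) by (simp add: M0_def)
    from frL[OF this b(1)] obtain \<theta> where "b < \<theta>" "\<theta> < 1" "ereal z < opt_max_redundancy \<theta>" by blast
    with b(2) show False by fastforce
  qed
  ultimately show "Limsup (at_left 1) opt_max_redundancy = ereal (2 - log 2 (exp 1))"
    unfolding M0_def cc_def by (rule antisym)
qed


end
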